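(* Let $\beta>0$ and let $Y_i:\mathbb{R}^+\to\mathbb{R}^{m\times(mn+2)}$, $i=1,\dots,n$, be the agents' regressors, and let $Y_{F_i}$ be the solution of $\dot Y_{F_i}=-\beta Y_{F_i}+Y_i$, $Y_{F_i}(0)=0$. If the set $\{Y_1,\dots,Y_n\}$ is collectively initially exciting, then the set $\{Y_{F_1},\dots,Y_{F_n}\}$ is collectively initially exciting.
   Context: The regressors are $Y_i(t)=\big[\ddot q_i,\; k(t)\dot q_i,\; \tfrac12 k(t)[Q_{i1}(t)I_m,\dots,Q_{in}(t)I_m]\big]$, where $q_i(t)\in\mathbb{R}^m$ are agent positions, $k(t)>0$ is a bounded gain, and $Q_{ij}(t)$ are entries of the signless Laplacian $\mathcal D(t)+\mathcal A(t)$ of the time-varying interaction graph. A set of bounded, locally integrable signals $\phi_i:\mathbb{R}^+\to\mathbb{R}^{u\times v}$, $i=1,\dots,n$, is collectively initially exciting (C-IE) if there exist constants $\bar T>0$, $\gamma>0$ such that $\int_{t_0}^{t_0+\bar T}\sum_{i=1}^n\phi_i^\top(\tau)\phi_i(\tau)\,d\tau\ge\gamma I_v$ for some $t_0\ge0$. *)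

theory Defs
  imports "HOL-Analysis.Analysis"
begin

text \<open>Signals on R+ are functions real => matrix, only their values on t >= 0 matter.
  A u x v real matrix is an element of real^'v^'u (rows indexed by 'u, columns by 'v).\<close>

definition bounded_signal :: "(real \<Rightarrow> real^'v^'u) \<Rightarrow> bool" where
  "bounded_signal \<phi> \<longleftrightarrow> bounded (\<phi> ` {0..})"

definition locally_integrable_signal :: "(real \<Rightarrow> real^'v^'u) \<Rightarrow> bool" where
  "locally_integrable_signal \<phi> \<longleftrightarrow> (\<forall>a b. 0 \<le> a \<longrightarrow> \<phi> integrable_on {a..b})"

definition mat_ge_scaled_id :: "real^'v^'v \<Rightarrow> real \<Rightarrow> bool" where
  "mat_ge_scaled_id M \<gamma> \<longleftrightarrow> (\<forall>x::real^'v. \<gamma> * (x \<bullet> x) \<le> x \<bullet> (M *v x))"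

definition C_IE :: "nat \<Rightarrow> (nat \<Rightarrow> real \<Rightarrow> real^'v^'u) \<Rightarrow> bool" where
  "C_IE n \<phi> \<longleftrightarrow>
     (\<forall>i\<in>{1..n}. bounded_signal (\<phi> i) \<and> locally_integrable_signal (\<phi> i)) \<and>
     (\<exists>T>0. \<exists>\<gamma>>0. \<exists>t0\<ge>0.
        mat_ge_scaled_id
          (integral {t0..t0+T} (\<lambda>\<tau>. \<Sum>i\<in>{1..n}. transpose (\<phi> i \<tau>) ** \<phi> i \<tau>)) \<gamma>)"

end

theory Submission
  imports Defs
begin

lemma hk_part:
  fixes f :: "real \<Rightarrow> real"
  assumes fi: "f integrable_on {a..b}"
    and z: "\<And>t. t \<in> {a..b} \<Longrightarrow> integral {a..t} f = 0"
  shows "integral ({a..b} \<inter> {c<..}) f = 0"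
proof (cases "c < a")
  case True
  then have "{a..b} \<inter> {c<..} = {a..b}" by auto
  then show ?thesis using z[of b] by (cases "a \<le> b") auto
next
  case False
  then have e: "{a..b} \<inter> {c<..} = {c<..b}" by auto
  show ?thesis
  proof (cases "c < b")
    case False then show ?thesis using e by simp
  next
    case True
    have "integral {c<..b} f = integral {c..b} f"
      by (rule integral_spike_set; rule negligible_subset[of "{c}"]) auto
    moreover have "integral {a..c} f + integral {c..b} f = integral {a..b} f"
      using \<open>\<not> c < a\<close> True fi by (intro Henstock_Kurzweil_Integration.integral_combine) (auto simp: not_less less_imp_le)
    moreover have "integral {a..c} f = 0" "integral {a..b} f = 0"
      using z \<open>\<not> c < a\<close> True by auto
    ultimately show ?thesis using e by simp
  qed
qed

lemma indef_zero_negligible: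
  fixes f :: "real \<Rightarrow> real"
  assumes f: "f absolutely_integrable_on {a..b}"
    and z: "\<And>t. t \<in> {a..b} \<Longrightarrow> integral {a..t} f = 0"
  shows "negligible {x \<in> {a..b}. f x \<noteq> 0}"
proof -
  define h where "h = (\<lambda>x. indicator {a..b} x * f x)"
  have hint: "integrable lebesgue h" using f by (simp add: set_integrable_def h_def)
  have hm: "h \<in> borel_measurable lebesgue" using hint by auto
  obtain g where gm: "g \<in> borel_measurable lborel" and hg: "AE x in lborel. h x = g x"
    using completion_ex_borel_measurable_real[OF hm] by blast
  have hgl: "AE x in lebesgue. h x = g x" using AE_completion[OF hg] .
  have gml: "g \<in> borel_measurable lebesgue" using gm by (rule measurable_completion)
  have gintl: "integrable lebesgue g" using integrable_cong_AE[OF hm gml hgl] hint by simp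
  have gint: "integrable lborel g" using gintl integrable_completion[OF gm] by simp
  have fint: "f integrable_on {a..b}" using f set_lebesgue_integral_eq_integral(1) by blast
  have key: "(LINT x|lborel. indicator {c<..} x * g x) = 0" for c
  proof -
    have m1: "(\<lambda>x. indicator {c<..} x * g x) \<in> borel_measurable lborel" using gm by measurable
    have "(LINT x|lborel. indicator {c<..} x * g x) = (LINT x|lebesgue. indicator {c<..} x * g x)"
      using integral_completion[OF m1] by simp
    also have "\<dots> = (LINT x|lebesgue. indicator {c<..} x * h x)"
      apply (rule integral_cong_AE)
      using hm gml hgl by (auto intro!: borel_measurable_times borel_measurable_indicator)
    also have "\<dots> = set_lebesgue_integral lebesgue {c<..} h"
      by (simp add: set_lebesgue_integral_def)
    also have "\<dots> = integral {c<..} h"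
      apply (rule set_lebesgue_integral_eq_integral(2))
      unfolding set_integrable_def using integrable_mult_indicator[OF _ hint, of "{c<..}"] by simp
    also have "\<dots> = integral {c<..} (\<lambda>x. if x \<in> {a..b} then f x else 0)"
      unfolding h_def by (rule arg_cong[where f="integral _"]) (auto simp: indicator_def)
    also have "\<dots> = integral ({a..b} \<inter> {c<..}) f" by (rule integral_restrict_Int)
    also have "\<dots> = 0" by (rule hk_part[OF fint z])
    finally show ?thesis .
  qed
  have dens: "density lborel (\<lambda>x. ennreal (g x)) = density lborel (\<lambda>x. ennreal (- g x))"
  proof (rule measure_eqI_lessThan)
    fix c
    have i1: "integrable lborel (\<lambda>x. indicator {c<..} x * g x)"
      using integrable_mult_indicator[OF _ gint, of "{c<..}"] by simp
    have fin1: "(\<integral>\<^sup>+x. ennreal (indicator {c<..} x * g x) \<partial>lborel) < \<infinity>"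
      using integrableD(2)[OF i1] by (simp add: less_top)
    have fin2: "(\<integral>\<^sup>+x. ennreal (- (indicator {c<..} x * g x)) \<partial>lborel) < \<infinity>"
      using integrableD(3)[OF i1] by (simp add: less_top)
    have eq: "enn2real (\<integral>\<^sup>+x. ennreal (indicator {c<..} x * g x) \<partial>lborel) =
        enn2real (\<integral>\<^sup>+x. ennreal (- (indicator {c<..} x * g x)) \<partial>lborel)"
      using key[of c] real_lebesgue_integral_def[OF i1] by simp
    have e1: "emeasure (density lborel (\<lambda>x. ennreal (g x))) {c<..} = (\<integral>\<^sup>+x. ennreal (indicator {c<..} x * g x) \<partial>lborel)"
      using gm by (subst emeasure_density) (auto intro!: nn_integral_cong simp: indicator_def)
    have e2: "emeasure (density lborel (\<lambda>x. ennreal (- g x))) {c<..} = (\<integral>\<^sup>+x. ennreal (- (indicator {c<..} x * g x)) \<partial>lborel)"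
      using gm by (subst emeasure_density) (auto intro!: nn_integral_cong simp: indicator_def)
    show "emeasure (density lborel (\<lambda>x. ennreal (g x))) {c<..} < \<infinity>" using e1 fin1 by simp
    show "emeasure (density lborel (\<lambda>x. ennreal (g x))) {c<..} = emeasure (density lborel (\<lambda>x. ennreal (- g x))) {c<..}"
    proof -
      have "(\<integral>\<^sup>+x. ennreal (indicator {c<..} x * g x) \<partial>lborel) =
          ennreal (enn2real (\<integral>\<^sup>+x. ennreal (indicator {c<..} x * g x) \<partial>lborel))"
        using fin1 by simp
      also have "\<dots> = ennreal (enn2real (\<integral>\<^sup>+x. ennreal (- (indicator {c<..} x * g x)) \<partial>lborel))"
        using eq by simp
      also have "\<dots> = (\<integral>\<^sup>+x. ennreal (- (indicator {c<..} x * g x)) \<partial>lborel)"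
        using fin2 by simp
      finally show ?thesis using e1 e2 by simp
    qed
  qed auto
  have "AE x in lborel. ennreal (g x) = ennreal (- g x)"
    by (rule sigma_finite_measure.density_unique[OF sigma_finite_lborel _ _ dens]) (use gm in auto)
  then have "AE x in lborel. g x = 0"
    by eventually_elim (metis ennreal_eq_0_iff ennreal_inj neg_le_0_iff_le nle_le)
  then have "AE x in lborel. h x = 0" using hg by eventually_elim auto
  then have "AE x in lebesgue. h x = 0" by (rule AE_completion)
  then obtain N where N: "N \<in> null_sets lebesgue" "{x \<in> space lebesgue. \<not> h x = 0} \<subseteq> N"
    by (auto simp: eventually_ae_filter)
  have "{x \<in> {a..b}. f x \<noteq> 0} \<subseteq> N" using N(2) by (auto simp: h_def)
  moreover have "negligible N" using N(1) negligible_iff_null_sets by blast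
  ultimately show ?thesis using negligible_subset by blast
qed

lemma scalar_upper_bound:
  fixes z y :: "real \<Rightarrow> real" and \<beta> B :: real
  assumes bpos: "\<beta> > 0"
    and yb: "\<And>s. 0 \<le> s \<Longrightarrow> \<bar>y s\<bar> \<le> B"
    and zi: "\<And>t. 0 \<le> t \<Longrightarrow> (\<lambda>s. - \<beta> * z s + y s) integrable_on {0..t}"
    and ze: "\<And>t. 0 \<le> t \<Longrightarrow> z t = integral {0..t} (\<lambda>s. - \<beta> * z s + y s)"
    and t1: "0 \<le> t1"
  shows "z t1 \<le> B / \<beta>"
proof (rule ccontr)
  define K where "K = B / \<beta>"
  define g where "g = (\<lambda>s. - \<beta> * z s + y s)"
  assume "\<not> z t1 \<le> B / \<beta>"
  then have zt1: "z t1 > K" by (simp add: K_def)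
  have B0: "0 \<le> B" using yb[of 0] by simp
  have K0: "0 \<le> K" using B0 bpos by (simp add: K_def)
  have gi: "g integrable_on {0..t1}" using zi[OF t1] by (simp add: g_def)
  have cont: "continuous_on {0..t1} z"
  proof -
    have "continuous_on {0..t1} (\<lambda>t. integral {0..t} g)"
      by (rule indefinite_integral_continuous_1[OF gi])
    then show ?thesis
      by (rule continuous_on_eq) (auto simp: ze g_def)
  qed
  define S where "S = {s \<in> {0..t1}. z s \<le> K}"
  have clS: "closed S" unfolding S_def
    by (rule continuous_on_closed_Collect_le[OF cont continuous_on_const]) auto
  have z0: "z 0 = 0" using ze[of 0] by simp
  have "0 \<in> S" using t1 z0 K0 by (simp add: S_def)
  then have Sne: "S \<noteq> {}" by auto
  have bdd: "bdd_above S" unfolding S_def by (rule bdd_aboveI[of _ t1]) auto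
  define s0 where "s0 = Sup S"
  have s0S: "s0 \<in> S" unfolding s0_def using closed_contains_Sup[OF Sne bdd clS] .
  then have s0: "0 \<le> s0" "s0 \<le> t1" "z s0 \<le> K" by (auto simp: S_def)
  have above: "z s > K" if "s0 < s" "s \<le> t1" for s
  proof (rule ccontr)
    assume "\<not> z s > K"
    then have "s \<in> S" using that s0 by (auto simp: S_def)
    then have "s \<le> s0" unfolding s0_def using bdd by (rule cSup_upper)
    then show False using that by simp
  qed
  have comb: "integral {0..s0} g + integral {s0..t1} g = integral {0..t1} g"
    using s0 gi by (intro Henstock_Kurzweil_Integration.integral_combine) auto
  have gi2: "g integrable_on {s0..t1}"
    by (rule integrable_on_subinterval[OF gi]) (use s0 in auto)
  define g' where "g' = (\<lambda>s. if s = s0 then 0 else g s)"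
  have eqi: "integral {s0..t1} g = integral {s0..t1} g'"
    by (rule integral_spike[of "{s0}"]) (auto simp: g'_def)
  have gi3: "(\<lambda>s. - g' s) integrable_on {s0..t1}"
    using integrable_neg[OF integrable_spike[OF gi2, of "{s0}" g']] by (auto simp: g'_def)
  have "0 \<le> integral {s0..t1} (\<lambda>s. - g' s)"
  proof (rule Henstock_Kurzweil_Integration.integral_nonneg[OF gi3])
    fix s assume s: "s \<in> {s0..t1}"
    show "0 \<le> - g' s"
    proof (cases "s = s0")
      case True then show ?thesis by (simp add: g'_def)
    next
      case False
      then have "z s > K" using s above by auto
      then have "\<beta> * z s > \<beta> * K" using bpos by simp
      moreover have "\<beta> * K = B" using bpos by (simp add: K_def)
      moreover have "y s \<le> B" using yb[of s] s s0 by auto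
      ultimately show ?thesis using False by (simp add: g'_def g_def)
    qed
  qed
  then have "integral {s0..t1} g \<le> 0"
    using eqi by (simp add: integral_neg)
  then have "z t1 \<le> z s0" using comb ze[OF t1] ze[OF s0(1)] by (simp add: g_def)
  then show False using zt1 s0 by simp
qed

lemma bl_mv: "bounded_linear (\<lambda>A::real^'v^'u. A *v x)"
proof -
  have "linear (\<lambda>A::real^'v^'u. A *v x)"
    by (rule linearI) (simp_all add: matrix_vector_mult_add_rdistrib scaleR_matrix_vector_assoc)
  then show ?thesis by (simp add: linear_conv_bounded_linear)
qed

lemma bl_quad: "bounded_linear (\<lambda>A::real^'v^'v. x \<bullet> (A *v x))"
  using bounded_linear_compose[OF bounded_linear_inner_right[of x] bl_mv[of x]] by simp

lemma quad_transpose: "x \<bullet> ((transpose A ** A) *v x) = (A *v x) \<bullet> ((A::real^'v^'u) *v x)"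
proof -
  have "(transpose A ** A) *v x = (A *v x) v* A"
    by (simp add: matrix_vector_mul_assoc[symmetric])
  then show ?thesis by (metis dot_lmul_matrix inner_commute)
qed

lemma quad_sum: "x \<bullet> ((\<Sum>i\<in>I. M i) *v x) = (\<Sum>i\<in>I. x \<bullet> (M i *v (x::real^'v)))"
  using linear_sum[OF bounded_linear.linear[OF bl_quad[of x]], of M I] by simp

lemma quad_integral:
  fixes F :: "real \<Rightarrow> real^'v^'v"
  assumes "F integrable_on S"
  shows "x \<bullet> (integral S F *v x) = integral S (\<lambda>t. x \<bullet> (F t *v x))"
  using integral_linear[OF assms bl_quad, of x] by (simp add: o_def)

lemma comp_bound: "\<bar>((A::real^'v^'u) *v x) $ j\<bar> \<le> norm A * norm x"
proof -
  have "\<bar>(A *v x) $ j\<bar> = \<bar>A $ j \<bullet> x\<bar>" by (simp add: matrix_vector_mul_component)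
  also have "\<dots> \<le> norm (A $ j) * norm x" by (rule Cauchy_Schwarz_ineq2)
  also have "\<dots> \<le> norm A * norm x" by (rule mult_right_mono[OF Finite_Cartesian_Product.norm_nth_le]) simp
  finally show ?thesis .
qed

lemma cont_gram:
  fixes F :: "real \<Rightarrow> real^'v^'u"
  assumes "continuous_on S F"
  shows "continuous_on S (\<lambda>t. transpose (F t) ** F t)"
  unfolding matrix_matrix_mult_def transpose_def
  by (intro continuous_intros assms) 

lemma q_cont: "continuous_on S (\<lambda>x::real^'v. x \<bullet> (M *v x))"
  by (intro continuous_intros linear_continuous_on[OF matrix_vector_mul_bounded_linear])

theorem proposition6:
  fixes \<beta> :: real and m n :: nat
    and Y YF :: "nat \<Rightarrow> real \<Rightarrow> real^'v^'u"
  assumes "\<beta> > 0"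
    and "CARD('u) = m" and "CARD('v) = m * n + 2"
    and "\<And>i t. i \<in> {1..n} \<Longrightarrow> 0 \<le> t \<Longrightarrow>
           (\<lambda>s. - \<beta> *\<^sub>R YF i s + Y i s) integrable_on {0..t}"
    and "\<And>i t. i \<in> {1..n} \<Longrightarrow> 0 \<le> t \<Longrightarrow>
           YF i t = integral {0..t} (\<lambda>s. - \<beta> *\<^sub>R YF i s + Y i s)"
    and "C_IE n Y"
  shows "C_IE n YF"
proof -
  have Yf: "\<And>i. i \<in> {1..n} \<Longrightarrow> bounded_signal (Y i) \<and> locally_integrable_signal (Y i)"
    using assms(6) unfolding C_IE_def by auto
  obtain T \<gamma> t0 where T: "T > 0" "\<gamma> > 0" "t0 \<ge> 0" and mg:
    "mat_ge_scaled_id (integral {t0..t0+T} (\<lambda>\<tau>. \<Sum>i\<in>{1..n}. transpose (Y i \<tau>) ** Y i \<tau>)) \<gamma>"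
    using assms(6) unfolding C_IE_def by auto
  have cont: "continuous_on {0..t} (YF i)" if i: "i \<in> {1..n}" and t: "0 \<le> t" for i t
  proof -
    have "continuous_on {0..t} (\<lambda>t. integral {0..t} (\<lambda>s. - \<beta> *\<^sub>R YF i s + Y i s))"
      by (rule indefinite_integral_continuous_1[OF assms(4)[OF i t]])
    then show ?thesis
      by (rule continuous_on_eq) (use assms(5)[OF i] in auto)
  qed
  have bnd: "bounded_signal (YF i)" if i: "i \<in> {1..n}" for i
  proof -
    obtain B where B: "\<And>s. s \<in> {0..} \<Longrightarrow> norm (Y i s) \<le> B"
      using Yf[OF i] by (auto simp: bounded_signal_def bounded_iff)
    have ent: "\<bar>YF i t $ j $ k\<bar> \<le> B / \<beta>" if t: "0 \<le> t" for t j k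
    proof -
      define P where "P = (\<lambda>A::real^'v^'u. A $ j $ k)"
      have blP: "bounded_linear P" unfolding P_def
        using bounded_linear_compose[OF bounded_linear_vec_nth[of k] bounded_linear_vec_nth[of j]] by simp
      have Pg: "P (- \<beta> *\<^sub>R YF i s + Y i s) = - \<beta> * P (YF i s) + P (Y i s)" for s
        by (simp add: P_def)
      have gi: "(\<lambda>s. - \<beta> * P (YF i s) + P (Y i s)) integrable_on {0..t}" if "0 \<le> t" for t
        using integrable_linear[OF assms(4)[OF i that] blP] unfolding o_def Pg .
      have ge: "P (YF i t) = integral {0..t} (\<lambda>s. - \<beta> * P (YF i s) + P (Y i s))" if "0 \<le> t" for t
        using integral_linear[OF assms(4)[OF i that] blP] assms(5)[OF i that] unfolding o_def Pg by simp
      have yb: "\<bar>P (Y i s)\<bar> \<le> B" if "0 \<le> s" for s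
      proof -
        have "\<bar>P (Y i s)\<bar> \<le> norm (Y i s $ j)" unfolding P_def by (rule component_le_norm_cart)
        also have "\<dots> \<le> norm (Y i s)" by (rule Finite_Cartesian_Product.norm_nth_le)
        also have "\<dots> \<le> B" using B that by simp
        finally show ?thesis .
      qed
      have up: "P (YF i t) \<le> B / \<beta>"
        by (rule scalar_upper_bound[OF assms(1) yb gi ge t])
      have gi': "(\<lambda>s. - \<beta> * (- P (YF i s)) + (- P (Y i s))) integrable_on {0..t}" if "0 \<le> t" for t
        using integrable_neg[OF gi[OF that]] by simp
      have ge': "- P (YF i t) = integral {0..t} (\<lambda>s. - \<beta> * (- P (YF i s)) + (- P (Y i s)))" if "0 \<le> t" for t
        using ge[OF that] integral_neg[of "{0..t}" "\<lambda>s. - \<beta> * P (YF i s) + P (Y i s)"] by (simp add: algebra_simps)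
      have lo: "- P (YF i t) \<le> B / \<beta>"
        by (rule scalar_upper_bound[OF assms(1) _ gi' ge' t]) (use yb in simp)
      show ?thesis using up lo by (simp add: P_def)
    qed
    have "norm (YF i t) \<le> real CARD('u) * (real CARD('v) * (B / \<beta>))" if "t \<in> {0..}" for t
    proof -
      have "norm (YF i t) \<le> (\<Sum>j\<in>UNIV. norm (YF i t $ j))"
        unfolding norm_vec_def by (rule L2_set_le_sum) simp
      also have "\<dots> \<le> (\<Sum>j\<in>(UNIV::'u set). real CARD('v) * (B / \<beta>))"
      proof (rule sum_mono)
        fix j
        have "norm (YF i t $ j) \<le> (\<Sum>k\<in>UNIV. \<bar>YF i t $ j $ k\<bar>)" by (rule norm_le_l1_cart)
        also have "\<dots> \<le> (\<Sum>k\<in>(UNIV::'v set). B / \<beta>)"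
          by (rule sum_mono) (use ent that in auto)
        finally show "norm (YF i t $ j) \<le> real CARD('v) * (B / \<beta>)" by simp
      qed
      finally show ?thesis by simp
    qed
    then show ?thesis unfolding bounded_signal_def bounded_iff by blast
  qed
  have lint: "locally_integrable_signal (YF i)" if i: "i \<in> {1..n}" for i
    unfolding locally_integrable_signal_def
  proof (intro allI impI)
    fix a b :: real assume a: "0 \<le> a"
    show "YF i integrable_on {a..b}"
    proof (cases "a \<le> b")
      case True
      have "continuous_on {a..b} (YF i)"
        by (rule continuous_on_subset[OF cont[OF i, of b]]) (use a True in auto)
      then show ?thesis by (rule integrable_continuous_interval)
    next
      case False then show ?thesis by (simp add: integrable_on_empty)
    qed
  qed
  define S where "S = t0 + T"
  have S0: "S > 0" using T by (simp add: S_def)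
  define MF where "MF = integral {0..S} (\<lambda>\<tau>. \<Sum>i\<in>{1..n}. transpose (YF i \<tau>) ** YF i \<tau>)"
  have MFint: "(\<lambda>\<tau>. \<Sum>i\<in>{1..n}. transpose (YF i \<tau>) ** YF i \<tau>) integrable_on {0..S}"
    by (intro integrable_continuous_interval continuous_on_sum cont_gram cont) (use S0 in auto)
  have qMF: "x \<bullet> (MF *v x) = integral {0..S} (\<lambda>\<tau>. \<Sum>i\<in>{1..n}. (YF i \<tau> *v x) \<bullet> (YF i \<tau> *v x))" for x
    unfolding MF_def quad_integral[OF MFint] quad_sum quad_transpose ..
  have pos: "x \<bullet> (MF *v x) > 0" if x1: "norm x = 1" for x
  proof (rule ccontr)
    assume npos: "\<not> x \<bullet> (MF *v x) > 0"
    define f where "f = (\<lambda>\<tau>. \<Sum>i\<in>{1..n}. (YF i \<tau> *v x) \<bullet> (YF i \<tau> *v x))"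
    have fc: "continuous_on {0..S} f" unfolding f_def
      by (intro continuous_intros linear_continuous_on[OF bl_mv] continuous_on_compose2[OF linear_continuous_on[OF bl_mv] cont]) (use S0 in auto)
    have f0: "0 \<le> f \<tau>" for \<tau> unfolding f_def by (intro sum_nonneg) simp
    have fi: "f integrable_on {0..S}" by (rule integrable_continuous_interval[OF fc])
    have "integral {0..S} f \<le> 0" using npos qMF[of x] by (simp add: f_def)
    moreover have "0 \<le> integral {0..S} f" by (rule Henstock_Kurzweil_Integration.integral_nonneg[OF fi f0])
    ultimately have "integral {0..S} f = 0" by simp
    then have fhi: "(f has_integral 0) (cbox 0 S)" using fi by (simp add: has_integral_integral)
    have fz: "f \<tau> = 0" if "\<tau> \<in> {0..S}" for \<tau>
      by (rule has_integral_0_cbox_imp_0[OF _ _ fhi]) (use fc f0 S0 that in auto)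
    have Gz: "YF i \<tau> *v x = 0" if i: "i \<in> {1..n}" and \<tau>: "\<tau> \<in> {0..S}" for i \<tau>
    proof -
      have "(\<Sum>i\<in>{1..n}. (YF i \<tau> *v x) \<bullet> (YF i \<tau> *v x)) = 0" using fz[OF \<tau>] by (simp add: f_def)
      then have "\<forall>i\<in>{1..n}. (YF i \<tau> *v x) \<bullet> (YF i \<tau> *v x) = 0"
        by (subst (asm) sum_nonneg_eq_0_iff) auto
      then show ?thesis using i by simp
    qed
    have negl: "negligible {s \<in> {0..S}. (Y i s *v x) $ j \<noteq> 0}" if i: "i \<in> {1..n}" for i j
    proof -
      define P where "P = (\<lambda>A::real^'v^'u. (A *v x) $ j)"
      have blP: "bounded_linear P" unfolding P_def
        using bounded_linear_compose[OF bounded_linear_vec_nth[of j] bl_mv[of x]] by simp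
      have Yi: "Y i integrable_on {0..t}" for t
        using Yf[OF i] by (auto simp: locally_integrable_signal_def)
      obtain B where B: "\<And>s. s \<in> {0..} \<Longrightarrow> norm (Y i s) \<le> B"
        using Yf[OF i] by (auto simp: bounded_signal_def bounded_iff)
      have Pi: "(\<lambda>s. P (Y i s)) integrable_on {0..t}" for t
        using integrable_linear[OF Yi blP] by (simp add: o_def)
      have ai: "(\<lambda>s. P (Y i s)) absolutely_integrable_on {0..S}"
      proof (rule absolutely_integrable_integrable_bound[OF _ Pi])
        fix s assume "s \<in> {0..S}"
        then have "norm (Y i s) \<le> B" using B by simp
        then show "norm (P (Y i s)) \<le> B" using comp_bound[of "Y i s" x j] x1 by (simp add: P_def)
      qed (rule integrable_const_ivl)
      have zi: "integral {0..t} (\<lambda>s. P (Y i s)) = 0" if t: "t \<in> {0..S}" for t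
      proof -
        have t0: "0 \<le> t" using t by simp
        have "0 = P (YF i t)" using Gz[OF i t] by (simp add: P_def)
        also have "\<dots> = P (integral {0..t} (\<lambda>s. - \<beta> *\<^sub>R YF i s + Y i s))" using assms(5)[OF i t0] by simp
        also have "\<dots> = integral {0..t} (\<lambda>s. P (- \<beta> *\<^sub>R YF i s + Y i s))"
          using integral_linear[OF assms(4)[OF i t0] blP] by (simp add: o_def)
        also have "\<dots> = integral {0..t} (\<lambda>s. P (Y i s))"
        proof (rule integral_cong)
          fix s assume "s \<in> {0..t}"
          then have "s \<in> {0..S}" using t by auto
          then have z: "YF i s *v x = 0" using Gz[OF i] by blast
          have "(- \<beta> *\<^sub>R YF i s + Y i s) *v x = - \<beta> *\<^sub>R (YF i s *v x) + Y i s *v x"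
            by (simp only: matrix_vector_mult_add_rdistrib scaleR_matrix_vector_assoc)
          then show "P (- \<beta> *\<^sub>R YF i s + Y i s) = P (Y i s)"
            using z by (simp add: P_def)
        qed
        finally show ?thesis by simp
      qed
      have "negligible {s \<in> {0..S}. P (Y i s) \<noteq> 0}"
        by (rule indef_zero_negligible[OF ai zi])
      then show ?thesis by (simp add: P_def)
    qed
    define N where "N = \<Union>((\<lambda>(i,j). {s \<in> {0..S}. (Y i s *v x) $ j \<noteq> 0}) ` ({1..n} \<times> UNIV))"
    have nN: "negligible N" unfolding N_def
    proof (rule negligible_Union)
      show "finite ((\<lambda>(i,j). {s \<in> {0..S}. (Y i s *v x) $ j \<noteq> 0}) ` ({1..n} \<times> UNIV))" by simp
    next
      fix Z assume "Z \<in> (\<lambda>(i,j). {s \<in> {0..S}. (Y i s *v x) $ j \<noteq> 0}) ` ({1..n} \<times> UNIV)"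
      then obtain i j where "i \<in> {1..n}" "Z = {s \<in> {0..S}. (Y i s *v x) $ j \<noteq> 0}" by auto
      then show "negligible Z" using negl by blast
    qed
    define MY where "MY = (\<lambda>\<tau>. \<Sum>i\<in>{1..n}. transpose (Y i \<tau>) ** Y i \<tau>)"
    have MY0: "x \<bullet> (MY s *v x) = 0" if s: "s \<in> {t0..t0+T} - N" for s
    proof -
      have "Y i s *v x = 0" if i: "i \<in> {1..n}" for i
      proof -
        have "s \<in> {0..S}" using s T by (auto simp: S_def)
        then have "(Y i s *v x) $ j = 0" for j using s i by (auto simp: N_def)
        then show ?thesis by (simp add: vec_eq_iff)
      qed
      then show ?thesis unfolding MY_def quad_sum quad_transpose by simp
    qed
    have "x \<bullet> (integral {t0..t0+T} MY *v x) = 0"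
    proof (cases "MY integrable_on {t0..t0+T}")
      case True
      have "x \<bullet> (integral {t0..t0+T} MY *v x) = integral {t0..t0+T} (\<lambda>s. x \<bullet> (MY s *v x))"
        by (rule quad_integral[OF True])
      also have "\<dots> = integral {t0..t0+T} (\<lambda>s. 0)"
        by (rule integral_spike[OF nN]) (use MY0 in auto)
      finally show ?thesis by simp
    next
      case False then show ?thesis by (simp add: not_integrable_integral)
    qed
    moreover have "\<gamma> * (x \<bullet> x) \<le> x \<bullet> (integral {t0..t0+T} MY *v x)"
      using mg unfolding mat_ge_scaled_id_def MY_def by blast
    moreover have "x \<bullet> x = 1" using x1 by (simp add: norm_eq_1)
    ultimately show False using T by simp
  qed
  obtain x0 where x0: "x0 \<in> sphere 0 1" and x0min: "\<And>y. y \<in> sphere 0 1 \<Longrightarrow> x0 \<bullet> (MF *v x0) \<le> y \<bullet> (MF *v y)"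
  proof -
    obtain k :: 'v where True by simp
    have "axis k (1::real) \<in> sphere 0 1" by simp
    then have "sphere (0::real^'v) 1 \<noteq> {}" by blast
    then show ?thesis using continuous_attains_inf[OF compact_sphere _ q_cont, of 0 1 MF] that by blast
  qed
  define \<gamma>' where "\<gamma>' = x0 \<bullet> (MF *v x0)"
  have g'pos: "\<gamma>' > 0" unfolding \<gamma>'_def using pos x0 by simp
  have mgF: "mat_ge_scaled_id MF \<gamma>'"
    unfolding mat_ge_scaled_id_def
  proof
    fix x :: "real^'v"
    show "\<gamma>' * (x \<bullet> x) \<le> x \<bullet> (MF *v x)"
    proof (cases "x = 0")
      case True then show ?thesis by simp
    next
      case False
      define u where "u = (1 / norm x) *\<^sub>R x"
      have u: "u \<in> sphere 0 1" using False by (simp add: u_def)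
      have xu: "x = norm x *\<^sub>R u" using False by (simp add: u_def)
      have "x \<bullet> (MF *v x) = (norm x)^2 * (u \<bullet> (MF *v u))"
        by (subst (1 2) xu) (simp add: matrix_vector_mult_scaleR power2_eq_square)
      moreover have "x \<bullet> x = (norm x)^2" by (simp add: power2_norm_eq_inner)
      moreover have "\<gamma>' \<le> u \<bullet> (MF *v u)" using x0min[OF u] by (simp add: \<gamma>'_def)
      ultimately show ?thesis by (metis mult.commute mult_right_mono zero_le_power2)
    qed
  qed
  show ?thesis
    unfolding C_IE_def
  proof (intro conjI ballI)
    fix i assume "i \<in> {1..n}"
    then show "bounded_signal (YF i)" "locally_integrable_signal (YF i)" using bnd lint by auto
  next
    show "\<exists>T>0. \<exists>\<gamma>>0. \<exists>t0\<ge>0. mat_ge_scaled_id (integral {t0..t0 + T} (\<lambda>\<tau>. \<Sum>i\<in>{1..n}. transpose (YF i \<tau>) ** YF i \<tau>)) \<gamma>"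
    proof -
      have "mat_ge_scaled_id (integral {0..0 + S} (\<lambda>\<tau>. \<Sum>i\<in>{1..n}. transpose (YF i \<tau>) ** YF i \<tau>)) \<gamma>'"
        using mgF unfolding MF_def by simp
      then show ?thesis using S0 g'pos by (meson order_refl)
    qed
  qed
qed

end
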